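(* Let $\Lambda$ be a net of quadrics in $\mathbb{P}^5$ which is stable with respect to every one-parameter subgroup of each of the numerical types $\rho_1=(1,1,1,1,1,-5)$, $\rho_2=(1,1,1,1,-2,-2)$, $\rho_3=(1,1,1,-1,-1,-1)$, $\rho_4=(2,2,-1,-1,-1,-1)$, $\rho_5=(5,-1,-1,-1,-1,-1)$. Let $\{x_0,\dots,x_5\}$ be any basis of $V$ and let $(Q_1,Q_2,Q_3)$ be a normalized basis of $\Lambda$ with respect to it. Then: (1) $Q_1,Q_2,Q_3\notin(x_5)$; (2) $(Q_2,Q_3)\not\subseteq(x_4,x_5)$ and $Q_3\notin(x_4,x_5)^2$; (3) $(Q_1,Q_2,Q_3)\not\subseteq(x_3,x_4,x_5)$, and either $(Q_2,Q_3)\not\subseteq(x_3,x_4,x_5)$ or $Q_3\notin(x_3,x_4,x_5)^2$; (4) $(Q_2,Q_3)\not\subseteq(x_2,x_3,x_4,x_5)^2$, and either $(Q_1,Q_2,Q_3)\not\subseteq(x_2,x_3,x_4,x_5)$ or $Q_3\notin(x_2,x_3,x_4,x_5)^2$; (5) $(Q_1,Q_2,Q_3)\not\subseteq(x_1,x_2,x_3,x_4,x_5)$ or $(Q_2,Q_3)\not\subseteq(x_1,x_2,x_3,x_4,x_5)^2$.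
   Context: $V=H^0(\mathbb{P}^5,\mathcal{O}(1))$, $W=H^0(\mathbb{P}^5,\mathcal{O}(2))$; a net of quadrics is a $3$-dimensional subspace $\Lambda\subset W$, a point of $Gr(3,W)\subset\mathbb{P}(\bigwedge^3W)$ with $SL(6)$-action. A 1-PS of numerical type $(a_0,\dots,a_5)$ ($a_0\ge\dots\ge a_5$, $\sum a_k=0$) acts diagonally on some basis $x_0,\dots,x_5$ of $V$ with these weights; weight of $x_ix_j$ is $a_i+a_j$, weight of a Plücker coordinate $x_{i_1}x_{j_1}\wedge x_{i_2}x_{j_2}\wedge x_{i_3}x_{j_3}$ is the sum of the three monomial weights. $\Lambda$ is stable with respect to $\rho$ if some Plücker coordinate not vanishing on $\Lambda$ has positive $\rho$-weight. Given the basis $x_0,\dots,x_5$, order quadratic monomials lexicographically ($x_0^2\succ x_0x_1\succ\cdots$), and let $in_{lex}(Q)$ be the lexicographically largest monomial of $Q$; a normalized basis of $\Lambda$ is a basis $(Q_1,Q_2,Q_3)$ with $in_{lex}(Q_1)\succ_{lex}in_{lex}(Q_2)\succ_{lex}in_{lex}(Q_3)$. For an ideal $I$, $(Q_2,Q_3)\subseteq I$ means $Q_2,Q_3\in I$. *)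

theory Defs
  imports Complex_Main
begin

text \<open>Fix reference coordinates v_0..v_5 on C^6 (so P^5 = P(C^6)).
A quadric is stored as a symmetric 6x6 complex matrix A (entries indexed by
i,j < 6, zero outside), the quadric being v |-> sum_{i,j<6} A i j v_i v_j.  A basis x_0..x_5 of V is encoded by an
invertible matrix M with v = M x, i.e. the x_k are the rows of M^{-1};
a quadric A then reads sum_{k,l} (M^T A M) k l x_k x_l in the basis x.\<close>

type_synonym mat6 = "nat \<Rightarrow> nat \<Rightarrow> complex"

definition quadrics :: "mat6 set" where
  "quadrics = {A. (\<forall>i j. A i j = A j i) \<and> (\<forall>i j. 6 \<le> i \<or> 6 \<le> j \<longrightarrow> A i j = 0)}"

definition invertible6 :: "mat6 \<Rightarrow> bool" where
  "invertible6 M \<longleftrightarrow> (\<exists>L. \<forall>i<6. \<forall>j<6.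
      (\<Sum>k<6. L i k * M k j) = (if i = j then 1 else 0) \<and>
      (\<Sum>k<6. M i k * L k j) = (if i = j then 1 else 0))"

definition cob :: "mat6 \<Rightarrow> mat6 \<Rightarrow> mat6" where
  "cob M A i j = (\<Sum>k<6. \<Sum>l<6. M k i * A k l * M l j)"

definition coef :: "mat6 \<Rightarrow> nat \<times> nat \<Rightarrow> complex" where
  "coef B m = (if fst m = snd m then B (fst m) (fst m) else B (fst m) (snd m) + B (snd m) (fst m))"

definition is_mono :: "nat \<times> nat \<Rightarrow> bool" where
  "is_mono m \<longleftrightarrow> fst m \<le> snd m \<and> snd m < 6"

text \<open>Lexicographic order on quadratic monomials: x_i x_j \<succ> x_k x_l.\<close>
definition mono_succ :: "nat \<times> nat \<Rightarrow> nat \<times> nat \<Rightarrow> bool" where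
  "mono_succ m n \<longleftrightarrow> fst m < fst n \<or> (fst m = fst n \<and> snd m < snd n)"

definition is_in_lex :: "mat6 \<Rightarrow> nat \<times> nat \<Rightarrow> bool" where
  "is_in_lex B m \<longleftrightarrow> is_mono m \<and> coef B m \<noteq> 0 \<and>
     (\<forall>n. is_mono n \<and> mono_succ n m \<longrightarrow> coef B n = 0)"

definition lincomb3 :: "complex \<Rightarrow> complex \<Rightarrow> complex \<Rightarrow> mat6 \<Rightarrow> mat6 \<Rightarrow> mat6 \<Rightarrow> mat6" where
  "lincomb3 a b c P1 P2 P3 = (\<lambda>i j. a * P1 i j + b * P2 i j + c * P3 i j)"

definition lin_indep3 :: "mat6 \<Rightarrow> mat6 \<Rightarrow> mat6 \<Rightarrow> bool" where
  "lin_indep3 P1 P2 P3 \<longleftrightarrow>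
     (\<forall>a b c. lincomb3 a b c P1 P2 P3 = (\<lambda>i j. 0) \<longrightarrow> a = 0 \<and> b = 0 \<and> c = 0)"

definition span3 :: "mat6 \<Rightarrow> mat6 \<Rightarrow> mat6 \<Rightarrow> mat6 set" where
  "span3 P1 P2 P3 = {lincomb3 a b c P1 P2 P3 | a b c. True}"

definition is_net :: "mat6 set \<Rightarrow> bool" where
  "is_net \<Lambda> \<longleftrightarrow> (\<exists>P1 P2 P3. P1 \<in> quadrics \<and> P2 \<in> quadrics \<and> P3 \<in> quadrics \<and>
      lin_indep3 P1 P2 P3 \<and> \<Lambda> = span3 P1 P2 P3)"

definition is_basis3 :: "mat6 set \<Rightarrow> mat6 \<Rightarrow> mat6 \<Rightarrow> mat6 \<Rightarrow> bool" where
  "is_basis3 \<Lambda> Q1 Q2 Q3 \<longleftrightarrow> Q1 \<in> \<Lambda> \<and> Q2 \<in> \<Lambda> \<and> Q3 \<in> \<Lambda> \<and>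
      lin_indep3 Q1 Q2 Q3 \<and> \<Lambda> = span3 Q1 Q2 Q3"

definition normalized_basis :: "mat6 \<Rightarrow> mat6 set \<Rightarrow> mat6 \<Rightarrow> mat6 \<Rightarrow> mat6 \<Rightarrow> bool" where
  "normalized_basis M \<Lambda> Q1 Q2 Q3 \<longleftrightarrow> is_basis3 \<Lambda> Q1 Q2 Q3 \<and>
     (\<exists>m1 m2 m3. is_in_lex (cob M Q1) m1 \<and> is_in_lex (cob M Q2) m2 \<and>
        is_in_lex (cob M Q3) m3 \<and> mono_succ m1 m2 \<and> mono_succ m2 m3)"

text \<open>Pluecker coordinate x_{m1} \<and> x_{m2} \<and> x_{m3} of span(Q1,Q2,Q3) (3x3 minor of the
coefficient matrix in the monomial basis of the coordinates x encoded by M).\<close>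
definition pluecker :: "mat6 \<Rightarrow> mat6 \<Rightarrow> mat6 \<Rightarrow> mat6 \<Rightarrow> nat \<times> nat \<Rightarrow> nat \<times> nat \<Rightarrow> nat \<times> nat \<Rightarrow> complex" where
  "pluecker M Q1 Q2 Q3 m1 m2 m3 =
     (let c1 = coef (cob M Q1); c2 = coef (cob M Q2); c3 = coef (cob M Q3) in
       c1 m1 * (c2 m2 * c3 m3 - c2 m3 * c3 m2)
     - c1 m2 * (c2 m1 * c3 m3 - c2 m3 * c3 m1)
     + c1 m3 * (c2 m1 * c3 m2 - c2 m2 * c3 m1))"

definition mono_weight :: "int list \<Rightarrow> nat \<times> nat \<Rightarrow> int" where
  "mono_weight a m = a ! fst m + a ! snd m"

text \<open>\<Lambda> is stable w.r.t. the 1-PS acting diagonally with weights a on the basis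
encoded by M.\<close>
definition stable_wrt :: "mat6 set \<Rightarrow> mat6 \<Rightarrow> int list \<Rightarrow> bool" where
  "stable_wrt \<Lambda> M a \<longleftrightarrow> (\<exists>Q1 Q2 Q3. is_basis3 \<Lambda> Q1 Q2 Q3 \<and>
     (\<exists>m1 m2 m3. is_mono m1 \<and> is_mono m2 \<and> is_mono m3 \<and>
        pluecker M Q1 Q2 Q3 m1 m2 m3 \<noteq> 0 \<and>
        mono_weight a m1 + mono_weight a m2 + mono_weight a m3 > 0))"

text \<open>Stable w.r.t. every 1-PS of numerical type a (diagonal in some basis of V).\<close>
definition stable_type :: "mat6 set \<Rightarrow> int list \<Rightarrow> bool" where
  "stable_type \<Lambda> a \<longleftrightarrow> (\<forall>M. invertible6 M \<longrightarrow> stable_wrt \<Lambda> M a)"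

definition qform :: "mat6 \<Rightarrow> (nat \<Rightarrow> complex) \<Rightarrow> complex" where
  "qform B y = (\<Sum>i<6. \<Sum>j<6. B i j * y i * y j)"

definition in_ideal :: "mat6 \<Rightarrow> nat \<Rightarrow> mat6 \<Rightarrow> bool" where
  "in_ideal M k A \<longleftrightarrow> (\<exists>c :: nat \<Rightarrow> nat \<Rightarrow> complex. \<forall>y.
      qform (cob M A) y = (\<Sum>m\<in>{k..<6}. y m * (\<Sum>l<6. c m l * y l)))"

definition in_ideal_sq :: "mat6 \<Rightarrow> nat \<Rightarrow> mat6 \<Rightarrow> bool" where
  "in_ideal_sq M k A \<longleftrightarrow> (\<exists>d :: nat \<Rightarrow> nat \<Rightarrow> complex. \<forall>y.
      qform (cob M A) y = (\<Sum>m\<in>{k..<6}. \<Sum>n\<in>{k..<6}. d m n * y m * y n))"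

end

theory Submission
  imports Defs
begin

definition ind :: "nat set \<Rightarrow> nat \<Rightarrow> complex" where
  "ind S i = (if i \<in> S then 1 else 0)"

lemma qform_ind: "S \<subseteq> {..<6} \<Longrightarrow> qform B (ind S) = (\<Sum>i\<in>S. \<Sum>j\<in>S. B i j)"
proof -
  assume S: "S \<subseteq> {..<6}"
  have "qform B (ind S) = (\<Sum>i<6. \<Sum>j<6. (if i \<in> S \<and> j \<in> S then B i j else 0))"
    unfolding qform_def ind_def by (intro sum.cong refl) auto
  also have "\<dots> = (\<Sum>i<6. if i \<in> S then (\<Sum>j<6. if j \<in> S then B i j else 0) else 0)"
    by (intro sum.cong) auto
  also have "\<dots> = (\<Sum>i\<in>S. \<Sum>j\<in>S. B i j)"
    using S by (simp add: sum.If_cases Int_absorb1 Int_absorb2)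
  finally show ?thesis .
qed

lemma ideal_zero:
  assumes "in_ideal M k A" "is_mono m" "snd m < k"
  shows "coef (cob M A) m = 0"
proof -
  define B where "B = cob M A"
  obtain c where c: "\<And>y. qform B y = (\<Sum>m\<in>{k..<6}. y m * (\<Sum>l<6. c m l * y l))"
    using assms(1) unfolding in_ideal_def B_def by blast
  obtain a b where m: "m = (a,b)" "a \<le> b" "b < k" "b < 6" using assms(2,3) by (cases m) (auto simp: is_mono_def)
  have Z: "qform B (ind S) = 0" if "S \<subseteq> {..<k}" for S
    unfolding c by (rule sum.neutral) (use that in \<open>auto simp: ind_def\<close>)
  have "B a a = 0" using Z[of "{a}"] qform_ind[of "{a}" B] m by auto
  moreover have "B b b = 0" using Z[of "{b}"] qform_ind[of "{b}" B] m by auto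
  moreover have "a \<noteq> b \<Longrightarrow> B a a + B a b + B b a + B b b = 0"
    using Z[of "{a,b}"] qform_ind[of "{a,b}" B] m by (auto simp: algebra_simps)
  ultimately show ?thesis using m by (auto simp: coef_def B_def)
qed

lemma idealsq_zero:
  assumes "in_ideal_sq M k A" "is_mono m" "fst m < k"
  shows "coef (cob M A) m = 0"
proof -
  define B where "B = cob M A"
  obtain d where d: "\<And>y. qform B y = (\<Sum>m\<in>{k..<6}. \<Sum>n\<in>{k..<6}. d m n * y m * y n)"
    using assms(1) unfolding in_ideal_sq_def B_def by blast
  obtain a b where m: "m = (a,b)" "a \<le> b" "a < k" "b < 6" using assms(2,3) by (cases m) (auto simp: is_mono_def)
  have E: "qform B y = qform B y'" if "\<And>i. i \<ge> k \<Longrightarrow> y i = y' i" for y y'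
    unfolding d by (intro sum.cong refl) (use that in auto)
  have "B a a = 0" using E[of "ind {a}" "ind {}"] qform_ind[of "{a}" B] qform_ind[of "{}" B] m
    by (auto simp: ind_def)
  moreover have "a \<noteq> b \<Longrightarrow> B a a + B a b + B b a + B b b = B b b"
    using E[of "ind {a,b}" "ind {b}"] qform_ind[of "{a,b}" B] qform_ind[of "{b}" B] m
    by (auto simp: ind_def algebra_simps)
  ultimately show ?thesis using m by (auto simp: coef_def B_def)
qed

lemma cob_lin: "cob M (lincomb3 a b c P1 P2 P3) i j = a * cob M P1 i j + b * cob M P2 i j + c * cob M P3 i j"
  by (simp add: cob_def lincomb3_def sum_distrib_left sum.distrib algebra_simps)

lemma coef_lin: "coef (cob M (lincomb3 a b c P1 P2 P3)) m = a * coef (cob M P1) m + b * coef (cob M P2) m + c * coef (cob M P3) m"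
  by (simp add: coef_def cob_lin algebra_simps)

lemma pl_lin:
  "pluecker M (lincomb3 a1 b1 c1 Q1 Q2 Q3) (lincomb3 a2 b2 c2 Q1 Q2 Q3) (lincomb3 a3 b3 c3 Q1 Q2 Q3) m1 m2 m3
   = (a1*(b2*c3 - b3*c2) - b1*(a2*c3-a3*c2) + c1*(a2*b3-a3*b2)) * pluecker M Q1 Q2 Q3 m1 m2 m3"
  unfolding pluecker_def Let_def coef_lin by (simp add: algebra_simps)

lemma prod0:
  fixes x y z :: complex
  assumes "x \<noteq> 0 \<Longrightarrow> wa \<le> b1" "y \<noteq> 0 \<Longrightarrow> wb \<le> b2" "z \<noteq> 0 \<Longrightarrow> wc \<le> b3"
    "b1 + b2 + b3 \<le> (0::int)" "wa + wb + wc > 0"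
  shows "x * y * z = 0"
proof (rule ccontr)
  assume "x * y * z \<noteq> 0"
  then have "x \<noteq> 0" "y \<noteq> 0" "z \<noteq> 0" by auto
  with assms show False by linarith
qed

lemma no_stab:
  assumes L: "\<Lambda> = span3 Q1 Q2 Q3" and st: "stable_wrt \<Lambda> M a"
    and B1: "\<And>m. is_mono m \<Longrightarrow> coef (cob M Q1) m \<noteq> 0 \<Longrightarrow> mono_weight a m \<le> bA"
    and B2: "\<And>m. is_mono m \<Longrightarrow> coef (cob M Q2) m \<noteq> 0 \<Longrightarrow> mono_weight a m \<le> bB"
    and B3: "\<And>m. is_mono m \<Longrightarrow> coef (cob M Q3) m \<noteq> 0 \<Longrightarrow> mono_weight a m \<le> bC"
    and b: "bA + bB + bC \<le> 0"
  shows False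
proof -
  obtain P1 P2 P3 m1 m2 m3 where bas: "is_basis3 \<Lambda> P1 P2 P3" and mm: "is_mono m1" "is_mono m2" "is_mono m3"
    and pl: "pluecker M P1 P2 P3 m1 m2 m3 \<noteq> 0"
    and pos: "mono_weight a m1 + mono_weight a m2 + mono_weight a m3 > 0"
    using st unfolding stable_wrt_def by blast
  have "P1 \<in> span3 Q1 Q2 Q3" "P2 \<in> span3 Q1 Q2 Q3" "P3 \<in> span3 Q1 Q2 Q3"
    using bas L unfolding is_basis3_def by auto
  then obtain a1 b1 c1 a2 b2 c2 a3 b3 c3 where
    "P1 = lincomb3 a1 b1 c1 Q1 Q2 Q3" "P2 = lincomb3 a2 b2 c2 Q1 Q2 Q3" "P3 = lincomb3 a3 b3 c3 Q1 Q2 Q3"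
    unfolding span3_def by blast
  with pl have pl': "pluecker M Q1 Q2 Q3 m1 m2 m3 \<noteq> 0" by (simp add: pl_lin)
  define w1 w2 w3 where "w1 = mono_weight a m1" "w2 = mono_weight a m2" "w3 = mono_weight a m3"
  note pos' = pos[folded w1_w2_w3_def]
  define c1 c2 c3 where "c1 = coef (cob M Q1)" "c2 = coef (cob M Q2)" "c3 = coef (cob M Q3)"
  have z1: "c1 m1 * c2 m2 * c3 m3 = 0" by (rule prod0[OF _ _ _ b, of _ w1 _ w2 _ w3]) (use B1 B2 B3 mm pos' in \<open>auto simp: c1_c2_c3_def w1_w2_w3_def\<close>)
  have z2: "c1 m1 * c2 m3 * c3 m2 = 0" by (rule prod0[OF _ _ _ b, of _ w1 _ w3 _ w2]) (use B1 B2 B3 mm pos' in \<open>auto simp: c1_c2_c3_def w1_w2_w3_def\<close>)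
  have z3: "c1 m2 * c2 m1 * c3 m3 = 0" by (rule prod0[OF _ _ _ b, of _ w2 _ w1 _ w3]) (use B1 B2 B3 mm pos' in \<open>auto simp: c1_c2_c3_def w1_w2_w3_def\<close>)
  have z4: "c1 m2 * c2 m3 * c3 m1 = 0" by (rule prod0[OF _ _ _ b, of _ w2 _ w3 _ w1]) (use B1 B2 B3 mm pos' in \<open>auto simp: c1_c2_c3_def w1_w2_w3_def\<close>)
  have z5: "c1 m3 * c2 m1 * c3 m2 = 0" by (rule prod0[OF _ _ _ b, of _ w3 _ w1 _ w2]) (use B1 B2 B3 mm pos' in \<open>auto simp: c1_c2_c3_def w1_w2_w3_def\<close>)
  have z6: "c1 m3 * c2 m2 * c3 m1 = 0" by (rule prod0[OF _ _ _ b, of _ w3 _ w2 _ w1]) (use B1 B2 B3 mm pos' in \<open>auto simp: c1_c2_c3_def w1_w2_w3_def\<close>)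
  have eq: "pluecker M Q1 Q2 Q3 m1 m2 m3 = c1 m1 * c2 m2 * c3 m3 - c1 m1 * c2 m3 * c3 m2 - c1 m2 * c2 m1 * c3 m3
      + c1 m2 * c2 m3 * c3 m1 + c1 m3 * c2 m1 * c3 m2 - c1 m3 * c2 m2 * c3 m1"
    unfolding pluecker_def Let_def c1_c2_c3_def by (simp add: algebra_simps)
  have "pluecker M Q1 Q2 Q3 m1 m2 m3 = 0" unfolding eq z1 z2 z3 z4 z5 z6 by simp
  with pl' show False by simp
qed

lemma mono_cases: "is_mono m \<Longrightarrow> m \<in> {(0,0),(0,1),(0,2),(0,3),(0,4),(0,5),(1,1),(1,2),(1,3),(1,4),(1,5),
  (2,2),(2,3),(2,4),(2,5),(3,3),(3,4),(3,5),(4,4),(4,5),(5,5)}"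
proof -
  assume "is_mono m"
  then obtain a b where m: "m = (a,b)" "a \<le> b" "b < 6" by (cases m) (auto simp: is_mono_def)
  have hb: "b=0 \<or> b=1 \<or> b=2 \<or> b=3 \<or> b=4 \<or> b=5" using m by arith
  have ha: "a=0 \<or> a=1 \<or> a=2 \<or> a=3 \<or> a=4 \<or> a=5" using m by arith
  from hb ha show ?thesis using m(2) unfolding m(1) by (elim disjE) simp_all
qed

lemma bI: "in_ideal M k A \<Longrightarrow> is_mono m \<Longrightarrow> coef (cob M A) m \<noteq> 0 \<Longrightarrow> k \<le> snd m"
  using ideal_zero by (metis not_le)
lemma bS: "in_ideal_sq M k A \<Longrightarrow> is_mono m \<Longrightarrow> coef (cob M A) m \<noteq> 0 \<Longrightarrow> k \<le> fst m"
  using idealsq_zero by (metis not_le)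

lemma w1g: "is_mono m \<Longrightarrow> mono_weight [1, 1, 1, 1, 1, -5] m \<le> 2"
  by (drule mono_cases) (auto simp: mono_weight_def)
lemma w1s: "is_mono m \<Longrightarrow> 5 \<le> snd m \<Longrightarrow> mono_weight [1, 1, 1, 1, 1, -5] m \<le> -4"
  by (drule mono_cases) (auto simp: mono_weight_def)
lemma w1f: "is_mono m \<Longrightarrow> 5 \<le> fst m \<Longrightarrow> mono_weight [1, 1, 1, 1, 1, -5] m \<le> -10"
  by (drule mono_cases) (auto simp: mono_weight_def)

lemma w2g: "is_mono m \<Longrightarrow> mono_weight [1, 1, 1, 1, -2, -2] m \<le> 2"
  by (drule mono_cases) (auto simp: mono_weight_def)
lemma w2s: "is_mono m \<Longrightarrow> 4 \<le> snd m \<Longrightarrow> mono_weight [1, 1, 1, 1, -2, -2] m \<le> -1"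
  by (drule mono_cases) (auto simp: mono_weight_def)
lemma w2f: "is_mono m \<Longrightarrow> 4 \<le> fst m \<Longrightarrow> mono_weight [1, 1, 1, 1, -2, -2] m \<le> -4"
  by (drule mono_cases) (auto simp: mono_weight_def)

lemma w3g: "is_mono m \<Longrightarrow> mono_weight [1, 1, 1, -1, -1, -1] m \<le> 2"
  by (drule mono_cases) (auto simp: mono_weight_def)
lemma w3s: "is_mono m \<Longrightarrow> 3 \<le> snd m \<Longrightarrow> mono_weight [1, 1, 1, -1, -1, -1] m \<le> 0"
  by (drule mono_cases) (auto simp: mono_weight_def)
lemma w3f: "is_mono m \<Longrightarrow> 3 \<le> fst m \<Longrightarrow> mono_weight [1, 1, 1, -1, -1, -1] m \<le> -2"
  by (drule mono_cases) (auto simp: mono_weight_def)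

lemma w4g: "is_mono m \<Longrightarrow> mono_weight [2, 2, -1, -1, -1, -1] m \<le> 4"
  by (drule mono_cases) (auto simp: mono_weight_def)
lemma w4s: "is_mono m \<Longrightarrow> 2 \<le> snd m \<Longrightarrow> mono_weight [2, 2, -1, -1, -1, -1] m \<le> 1"
  by (drule mono_cases) (auto simp: mono_weight_def)
lemma w4f: "is_mono m \<Longrightarrow> 2 \<le> fst m \<Longrightarrow> mono_weight [2, 2, -1, -1, -1, -1] m \<le> -2"
  by (drule mono_cases) (auto simp: mono_weight_def)

lemma w5g: "is_mono m \<Longrightarrow> mono_weight [5, -1, -1, -1, -1, -1] m \<le> 10"
  by (drule mono_cases) (auto simp: mono_weight_def)
lemma w5s: "is_mono m \<Longrightarrow> 1 \<le> snd m \<Longrightarrow> mono_weight [5, -1, -1, -1, -1, -1] m \<le> 4"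
  by (drule mono_cases) (auto simp: mono_weight_def)
lemma w5f: "is_mono m \<Longrightarrow> 1 \<le> fst m \<Longrightarrow> mono_weight [5, -1, -1, -1, -1, -1] m \<le> -2"
  by (drule mono_cases) (auto simp: mono_weight_def)

theorem lemma2p1:
  fixes \<Lambda> :: "mat6 set" and M Q1 Q2 Q3 :: mat6
  assumes net: "is_net \<Lambda>"
    and s1: "stable_type \<Lambda> [1, 1, 1, 1, 1, -5]"
    and s2: "stable_type \<Lambda> [1, 1, 1, 1, -2, -2]"
    and s3: "stable_type \<Lambda> [1, 1, 1, -1, -1, -1]"
    and s4: "stable_type \<Lambda> [2, 2, -1, -1, -1, -1]"
    and s5: "stable_type \<Lambda> [5, -1, -1, -1, -1, -1]"
    and M: "invertible6 M"
    and nb: "normalized_basis M \<Lambda> Q1 Q2 Q3"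
  shows "(\<not> in_ideal M 5 Q1 \<and> \<not> in_ideal M 5 Q2 \<and> \<not> in_ideal M 5 Q3)
    \<and> (\<not> (in_ideal M 4 Q2 \<and> in_ideal M 4 Q3) \<and> \<not> in_ideal_sq M 4 Q3)
    \<and> (\<not> (in_ideal M 3 Q1 \<and> in_ideal M 3 Q2 \<and> in_ideal M 3 Q3)
       \<and> (\<not> (in_ideal M 3 Q2 \<and> in_ideal M 3 Q3) \<or> \<not> in_ideal_sq M 3 Q3))
    \<and> (\<not> (in_ideal_sq M 2 Q2 \<and> in_ideal_sq M 2 Q3)
       \<and> (\<not> (in_ideal M 2 Q1 \<and> in_ideal M 2 Q2 \<and> in_ideal M 2 Q3) \<or> \<not> in_ideal_sq M 2 Q3))
    \<and> (\<not> (in_ideal M 1 Q1 \<and> in_ideal M 1 Q2 \<and> in_ideal M 1 Q3)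
       \<or> \<not> (in_ideal_sq M 1 Q2 \<and> in_ideal_sq M 1 Q3))"
proof -
  have L: "\<Lambda> = span3 Q1 Q2 Q3" using nb unfolding normalized_basis_def is_basis3_def by blast
  have st1: "stable_wrt \<Lambda> M [1, 1, 1, 1, 1, -5]" using s1 M unfolding stable_type_def by blast
  have st2: "stable_wrt \<Lambda> M [1, 1, 1, 1, -2, -2]" using s2 M unfolding stable_type_def by blast
  have st3: "stable_wrt \<Lambda> M [1, 1, 1, -1, -1, -1]" using s3 M unfolding stable_type_def by blast
  have st4: "stable_wrt \<Lambda> M [2, 2, -1, -1, -1, -1]" using s4 M unfolding stable_type_def by blast
  have st5: "stable_wrt \<Lambda> M [5, -1, -1, -1, -1, -1]" using s5 M unfolding stable_type_def by blast
  have p0: "\<not> (in_ideal M 5 Q1)"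
  proof
    assume h: "in_ideal M 5 Q1"
    show False
    proof (rule no_stab[OF L st1, where bA="-4" and bB="2" and bC="2"])
      fix m assume "is_mono m" "coef (cob M Q1) m \<noteq> 0"
      then show "mono_weight [1, 1, 1, 1, 1, -5] m \<le> -4" using h by (blast intro: w1s w1f w1g bI bS)
    next
      fix m assume "is_mono m" "coef (cob M Q2) m \<noteq> 0"
      then show "mono_weight [1, 1, 1, 1, 1, -5] m \<le> 2" using h by (blast intro: w1s w1f w1g bI bS)
    next
      fix m assume "is_mono m" "coef (cob M Q3) m \<noteq> 0"
      then show "mono_weight [1, 1, 1, 1, 1, -5] m \<le> 2" using h by (blast intro: w1s w1f w1g bI bS)
    qed simp
  qed
  have p1: "\<not> (in_ideal M 5 Q2)"
  proof
    assume h: "in_ideal M 5 Q2"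
    show False
    proof (rule no_stab[OF L st1, where bA="2" and bB="-4" and bC="2"])
      fix m assume "is_mono m" "coef (cob M Q1) m \<noteq> 0"
      then show "mono_weight [1, 1, 1, 1, 1, -5] m \<le> 2" using h by (blast intro: w1s w1f w1g bI bS)
    next
      fix m assume "is_mono m" "coef (cob M Q2) m \<noteq> 0"
      then show "mono_weight [1, 1, 1, 1, 1, -5] m \<le> -4" using h by (blast intro: w1s w1f w1g bI bS)
    next
      fix m assume "is_mono m" "coef (cob M Q3) m \<noteq> 0"
      then show "mono_weight [1, 1, 1, 1, 1, -5] m \<le> 2" using h by (blast intro: w1s w1f w1g bI bS)
    qed simp
  qed
  have p2: "\<not> (in_ideal M 5 Q3)"
  proof
    assume h: "in_ideal M 5 Q3"
    show False
    proof (rule no_stab[OF L st1, where bA="2" and bB="2" and bC="-4"])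
      fix m assume "is_mono m" "coef (cob M Q1) m \<noteq> 0"
      then show "mono_weight [1, 1, 1, 1, 1, -5] m \<le> 2" using h by (blast intro: w1s w1f w1g bI bS)
    next
      fix m assume "is_mono m" "coef (cob M Q2) m \<noteq> 0"
      then show "mono_weight [1, 1, 1, 1, 1, -5] m \<le> 2" using h by (blast intro: w1s w1f w1g bI bS)
    next
      fix m assume "is_mono m" "coef (cob M Q3) m \<noteq> 0"
      then show "mono_weight [1, 1, 1, 1, 1, -5] m \<le> -4" using h by (blast intro: w1s w1f w1g bI bS)
    qed simp
  qed
  have p3: "\<not> (in_ideal M 4 Q2 \<and> in_ideal M 4 Q3)"
  proof
    assume h: "in_ideal M 4 Q2 \<and> in_ideal M 4 Q3"
    show False
    proof (rule no_stab[OF L st2, where bA="2" and bB="-1" and bC="-1"])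
      fix m assume "is_mono m" "coef (cob M Q1) m \<noteq> 0"
      then show "mono_weight [1, 1, 1, 1, -2, -2] m \<le> 2" using h by (blast intro: w2s w2f w2g bI bS)
    next
      fix m assume "is_mono m" "coef (cob M Q2) m \<noteq> 0"
      then show "mono_weight [1, 1, 1, 1, -2, -2] m \<le> -1" using h by (blast intro: w2s w2f w2g bI bS)
    next
      fix m assume "is_mono m" "coef (cob M Q3) m \<noteq> 0"
      then show "mono_weight [1, 1, 1, 1, -2, -2] m \<le> -1" using h by (blast intro: w2s w2f w2g bI bS)
    qed simp
  qed
  have p4: "\<not> (in_ideal_sq M 4 Q3)"
  proof
    assume h: "in_ideal_sq M 4 Q3"
    show False
    proof (rule no_stab[OF L st2, where bA="2" and bB="2" and bC="-4"])
      fix m assume "is_mono m" "coef (cob M Q1) m \<noteq> 0"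
      then show "mono_weight [1, 1, 1, 1, -2, -2] m \<le> 2" using h by (blast intro: w2s w2f w2g bI bS)
    next
      fix m assume "is_mono m" "coef (cob M Q2) m \<noteq> 0"
      then show "mono_weight [1, 1, 1, 1, -2, -2] m \<le> 2" using h by (blast intro: w2s w2f w2g bI bS)
    next
      fix m assume "is_mono m" "coef (cob M Q3) m \<noteq> 0"
      then show "mono_weight [1, 1, 1, 1, -2, -2] m \<le> -4" using h by (blast intro: w2s w2f w2g bI bS)
    qed simp
  qed
  have p5: "\<not> (in_ideal M 3 Q1 \<and> in_ideal M 3 Q2 \<and> in_ideal M 3 Q3)"
  proof
    assume h: "in_ideal M 3 Q1 \<and> in_ideal M 3 Q2 \<and> in_ideal M 3 Q3"
    show False
    proof (rule no_stab[OF L st3, where bA="0" and bB="0" and bC="0"])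
      fix m assume "is_mono m" "coef (cob M Q1) m \<noteq> 0"
      then show "mono_weight [1, 1, 1, -1, -1, -1] m \<le> 0" using h by (blast intro: w3s w3f w3g bI bS)
    next
      fix m assume "is_mono m" "coef (cob M Q2) m \<noteq> 0"
      then show "mono_weight [1, 1, 1, -1, -1, -1] m \<le> 0" using h by (blast intro: w3s w3f w3g bI bS)
    next
      fix m assume "is_mono m" "coef (cob M Q3) m \<noteq> 0"
      then show "mono_weight [1, 1, 1, -1, -1, -1] m \<le> 0" using h by (blast intro: w3s w3f w3g bI bS)
    qed simp
  qed
  have p6: "\<not> ((in_ideal M 3 Q2 \<and> in_ideal M 3 Q3) \<and> in_ideal_sq M 3 Q3)"
  proof
    assume h: "(in_ideal M 3 Q2 \<and> in_ideal M 3 Q3) \<and> in_ideal_sq M 3 Q3"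
    show False
    proof (rule no_stab[OF L st3, where bA="2" and bB="0" and bC="-2"])
      fix m assume "is_mono m" "coef (cob M Q1) m \<noteq> 0"
      then show "mono_weight [1, 1, 1, -1, -1, -1] m \<le> 2" using h by (blast intro: w3s w3f w3g bI bS)
    next
      fix m assume "is_mono m" "coef (cob M Q2) m \<noteq> 0"
      then show "mono_weight [1, 1, 1, -1, -1, -1] m \<le> 0" using h by (blast intro: w3s w3f w3g bI bS)
    next
      fix m assume "is_mono m" "coef (cob M Q3) m \<noteq> 0"
      then show "mono_weight [1, 1, 1, -1, -1, -1] m \<le> -2" using h by (blast intro: w3s w3f w3g bI bS)
    qed simp
  qed
  have p7: "\<not> (in_ideal_sq M 2 Q2 \<and> in_ideal_sq M 2 Q3)"
  proof
    assume h: "in_ideal_sq M 2 Q2 \<and> in_ideal_sq M 2 Q3"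
    show False
    proof (rule no_stab[OF L st4, where bA="4" and bB="-2" and bC="-2"])
      fix m assume "is_mono m" "coef (cob M Q1) m \<noteq> 0"
      then show "mono_weight [2, 2, -1, -1, -1, -1] m \<le> 4" using h by (blast intro: w4s w4f w4g bI bS)
    next
      fix m assume "is_mono m" "coef (cob M Q2) m \<noteq> 0"
      then show "mono_weight [2, 2, -1, -1, -1, -1] m \<le> -2" using h by (blast intro: w4s w4f w4g bI bS)
    next
      fix m assume "is_mono m" "coef (cob M Q3) m \<noteq> 0"
      then show "mono_weight [2, 2, -1, -1, -1, -1] m \<le> -2" using h by (blast intro: w4s w4f w4g bI bS)
    qed simp
  qed
  have p8: "\<not> ((in_ideal M 2 Q1 \<and> in_ideal M 2 Q2 \<and> in_ideal M 2 Q3) \<and> in_ideal_sq M 2 Q3)"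
  proof
    assume h: "(in_ideal M 2 Q1 \<and> in_ideal M 2 Q2 \<and> in_ideal M 2 Q3) \<and> in_ideal_sq M 2 Q3"
    show False
    proof (rule no_stab[OF L st4, where bA="1" and bB="1" and bC="-2"])
      fix m assume "is_mono m" "coef (cob M Q1) m \<noteq> 0"
      then show "mono_weight [2, 2, -1, -1, -1, -1] m \<le> 1" using h by (blast intro: w4s w4f w4g bI bS)
    next
      fix m assume "is_mono m" "coef (cob M Q2) m \<noteq> 0"
      then show "mono_weight [2, 2, -1, -1, -1, -1] m \<le> 1" using h by (blast intro: w4s w4f w4g bI bS)
    next
      fix m assume "is_mono m" "coef (cob M Q3) m \<noteq> 0"
      then show "mono_weight [2, 2, -1, -1, -1, -1] m \<le> -2" using h by (blast intro: w4s w4f w4g bI bS)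
    qed simp
  qed
  have p9: "\<not> ((in_ideal M 1 Q1 \<and> in_ideal M 1 Q2 \<and> in_ideal M 1 Q3) \<and> (in_ideal_sq M 1 Q2 \<and> in_ideal_sq M 1 Q3))"
  proof
    assume h: "(in_ideal M 1 Q1 \<and> in_ideal M 1 Q2 \<and> in_ideal M 1 Q3) \<and> (in_ideal_sq M 1 Q2 \<and> in_ideal_sq M 1 Q3)"
    show False
    proof (rule no_stab[OF L st5, where bA="4" and bB="-2" and bC="-2"])
      fix m assume "is_mono m" "coef (cob M Q1) m \<noteq> 0"
      then show "mono_weight [5, -1, -1, -1, -1, -1] m \<le> 4" using h by (blast intro: w5s w5f w5g bI bS)
    next
      fix m assume "is_mono m" "coef (cob M Q2) m \<noteq> 0"
      then show "mono_weight [5, -1, -1, -1, -1, -1] m \<le> -2" using h by (blast intro: w5s w5f w5g bI bS)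
    next
      fix m assume "is_mono m" "coef (cob M Q3) m \<noteq> 0"
      then show "mono_weight [5, -1, -1, -1, -1, -1] m \<le> -2" using h by (blast intro: w5s w5f w5g bI bS)
    qed simp
  qed
  show ?thesis using p0 p1 p2 p3 p4 p5 p6 p7 p8 p9 by blast
qed

end
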